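(* Let $\mathcal{T}$ be a set of monomials, and let $\mathcal{L}=(n,\mathcal{M},\mathcal{C})$ be a simple linearization with $\mathcal{S}\cup\mathcal{T}\subseteq\mathcal{M}$ such that every node of $D(\mathcal{L})$ with in-degree $0$ belongs to $\mathcal{T}$. Let $m_1,m_2,m_3\in\mathcal{T}$ be pairwise different with $m_1\cap m_2\cap m_3\neq\emptyset$ such that $m_3\cap(m_1\cup m_2)$ is a proper superset of both $m_3\cap m_1$ and $m_3\cap m_2$. Then $G(D(\mathcal{L}))$ contains a cycle.
   Context: $[n]=\{1,\dots,n\}$; a monomial is a nonempty subset of $[n]$; $\mathcal{S}=\{\{i\}:i\in[n]\}$. A linearization is a triple $\mathcal{L}=(n,\mathcal{M},\mathcal{C})$, where $\mathcal{M}$ is a set of monomials with $\mathcal{S}\subseteq\mathcal{M}$ and $\mathcal{C}$ is a set of AND-constraints; each AND-constraint is a set $c\subseteq\mathcal{M}$ whose union $\bigcup c$ (resultant) lies in $\mathcal{M}$. $\mathcal{P}=\mathcal{M}\setminus\mathcal{S}$. Linearizations are consistent: each $m\in\mathcal{P}$ is the resultant of some $c$ with $|m'|<|m|$ for all $m'\in c$. $\mathcal{L}$ is simple if each proper monomial is the resultant of exactly one AND-constraint and $|\mathcal{C}|=|\mathcal{P}|$. $D(\mathcal{L})$ has node set $\mathcal{M}$ and, for each $c\in\mathcal{C}$, arcs from $\bigcup c$ to each $m\in c$; $G(D(\mathcal{L}))$ is its underlying undirected graph. *)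

theory Defs
  imports Main
begin

definition monomials :: "nat \<Rightarrow> nat set set" where
  "monomials n = {m. m \<noteq> {} \<and> m \<subseteq> {1..n}}"

definition singletons :: "nat \<Rightarrow> nat set set" where
  "singletons n = {{i} | i. i \<in> {1..n}}"

definition proper_monomials :: "nat \<Rightarrow> nat set set \<Rightarrow> nat set set" where
  "proper_monomials n M = M - singletons n"

text \<open>Linearization (n, M, C), including the standing consistency assumption.\<close>
definition linearization :: "nat \<Rightarrow> nat set set \<Rightarrow> nat set set set \<Rightarrow> bool" where
  "linearization n M C \<longleftrightarrow>
     M \<subseteq> monomials n \<and> singletons n \<subseteq> M \<and>
     (\<forall>c\<in>C. c \<subseteq> M \<and> \<Union>c \<in> M) \<and>
     (\<forall>m\<in>proper_monomials n M. \<exists>c\<in>C. \<Union>c = m \<and> (\<forall>m'\<in>c. card m' < card m))"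

definition simple_linearization :: "nat \<Rightarrow> nat set set \<Rightarrow> nat set set set \<Rightarrow> bool" where
  "simple_linearization n M C \<longleftrightarrow> linearization n M C \<and>
     (\<forall>m\<in>proper_monomials n M. \<exists>!c. c \<in> C \<and> \<Union>c = m) \<and>
     card C = card (proper_monomials n M)"

definition D_arcs :: "nat set set set \<Rightarrow> (nat set \<times> nat set) set" where
  "D_arcs C = {(\<Union>c, m) | c m. c \<in> C \<and> m \<in> c}"

definition in_degree_zero :: "nat set set set \<Rightarrow> nat set \<Rightarrow> bool" where
  "in_degree_zero C v \<longleftrightarrow> (\<nexists>u. (u, v) \<in> D_arcs C)"

definition G_adj :: "nat set set set \<Rightarrow> nat set \<Rightarrow> nat set \<Rightarrow> bool" where
  "G_adj C u v \<longleftrightarrow> (u, v) \<in> D_arcs C \<or> (v, u) \<in> D_arcs C"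

definition G_has_cycle :: "nat set set \<Rightarrow> nat set set set \<Rightarrow> bool" where
  "G_has_cycle M C \<longleftrightarrow> (\<exists>vs. length vs \<ge> 3 \<and> distinct vs \<and> set vs \<subseteq> M \<and>
     (\<forall>i < length vs. G_adj C (vs ! i) (vs ! ((i + 1) mod length vs))))"

end

theory Submission
  imports Defs
begin

definition cyc :: "('a \<Rightarrow> 'a \<Rightarrow> bool) \<Rightarrow> 'a set \<Rightarrow> bool" where
  "cyc E V \<longleftrightarrow> (\<exists>vs. length vs \<ge> 3 \<and> distinct vs \<and> set vs \<subseteq> V \<and>
     (\<forall>i < length vs. E (vs ! i) (vs ! ((i + 1) mod length vs))))"

lemma cyc_intro:
  assumes "length vs \<ge> 3" "distinct vs" "set vs \<subseteq> V" "successively E vs"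
    "E (last vs) (hd vs)"
  shows "cyc E V"
  unfolding cyc_def
proof (intro exI conjI allI impI)
  fix i assume i: "i < length vs"
  show "E (vs ! i) (vs ! ((i + 1) mod length vs))"
  proof (cases "Suc i < length vs")
    case True
    then show ?thesis using successively_nth[OF assms(4) True] by simp
  next
    case False
    then have "i = length vs - 1" using i by simp
    moreover have "vs \<noteq> []" using assms(1) by auto
    ultimately show ?thesis using assms(5) i
      by (simp add: last_conv_nth hd_conv_nth)
  qed
qed (use assms in auto)

lemma L2:
  assumes "symp E"
  shows "distinct xs \<Longrightarrow> distinct ys \<Longrightarrow> successively E xs \<Longrightarrow> successively E ys \<Longrightarrow>
    xs \<noteq> [] \<Longrightarrow> ys \<noteq> [] \<Longrightarrow> hd xs = hd ys \<Longrightarrow> last xs = last ys \<Longrightarrow> xs \<noteq> ys \<Longrightarrow>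
    set xs \<subseteq> V \<Longrightarrow> set ys \<subseteq> V \<Longrightarrow> cyc E V"
proof (induction xs arbitrary: ys)
  case Nil then show ?case by simp
next
  case (Cons a xs')
  obtain ys' where ys: "ys = a # ys'" using Cons.prems by (cases ys) auto
  have xs'ne: "xs' \<noteq> []"
  proof
    assume "xs' = []"
    then have "last ys = a" using Cons.prems by simp
    then have "ys' = []" using Cons.prems(2) ys by (metis distinct.simps(2) last_ConsR last_in_set)
    then show False using Cons.prems ys \<open>xs' = []\<close> by simp
  qed
  have ys'ne: "ys' \<noteq> []"
  proof
    assume "ys' = []"
    then have "last (a # xs') = a" using Cons.prems ys by simp
    then show False using Cons.prems(1) xs'ne by (metis distinct.simps(2) last_ConsR last_in_set)
  qed
  show ?case
  proof (cases "hd xs' = hd ys'")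
    case True
    show ?thesis
      apply (rule Cons.IH[of ys'])
      using Cons.prems ys xs'ne ys'ne True by (auto simp: successively_Cons)
  next
    case False
    have "last xs' \<in> set ys'" using Cons.prems ys xs'ne ys'ne by (simp add: last_in_set)
    then have "\<exists>x\<in>set xs'. x \<in> set ys'" using xs'ne last_in_set by blast
    from split_list_first_prop[OF this] obtain p w q where xsd: "xs' = p @ w # q" and w: "w \<in> set ys'" and p: "\<forall>y\<in>set p. y \<notin> set ys'"
      by blast
    obtain r s where ysd: "ys' = r @ w # s" using w split_list by fast
    define vs where "vs = a # p @ w # rev r"
    have dx: "distinct (a # p @ w # q)" using Cons.prems(1) xsd by simp
    have dy: "distinct (a # r @ w # s)" using Cons.prems(2) ys ysd by simp
    have sx: "successively E ((a # p) @ [w])"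
      using Cons.prems(3) xsd successively_append_iff[of E "(a # p) @ [w]" q] by simp
    have sy: "successively E ((a # r) @ [w])"
      using Cons.prems(4) ys ysd successively_append_iff[of E "(a # r) @ [w]" s] by simp
    have sx1: "successively E (a # p)" and sx2: "E (last (a # p)) w"
      using sx by (simp_all only: successively_append_iff) auto
    have symE: "\<And>x y. E x y \<Longrightarrow> E y x" using assms by (meson sympD)
    show ?thesis
    proof (rule cyc_intro[of vs])
      show "length vs \<ge> 3"
      proof (cases "p = [] \<and> r = []")
        case True
        then show ?thesis using False xsd ysd by simp
      next
        case False
        then have "length p + length r \<ge> 1" by (cases p; cases r) auto
        then show ?thesis unfolding vs_def by auto
      qed
      show "distinct vs" unfolding vs_def using dx dy p ysd by auto
      show "set vs \<subseteq> V" unfolding vs_def using Cons.prems ys xsd ysd by auto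
      show "successively E vs"
      proof -
        have "successively E (r @ [w])" using sy by (simp add: successively_Cons)
        then have "successively (\<lambda>x y. E y x) (r @ [w])"
          by (rule successively_mono) (use symE in auto)
        then have "successively E (rev (r @ [w]))" by (subst successively_rev)
        then have "successively E (w # rev r)" by (metis rev_eq_Cons_iff rev_rev_ident)
        then show ?thesis unfolding vs_def
          using sx1 sx2 successively_append_iff[of E "a # p" "w # rev r"] by simp
      qed
      have "last vs = hd ys'" unfolding vs_def using ysd by (cases r) auto
      moreover have "E a (hd ys')" using Cons.prems(4) ys ys'ne by (simp add: successively_Cons)
      ultimately show "E (last vs) (hd vs)" unfolding vs_def using symE by simp
    qed
  qed
qed

lemma succ_distinct:
  "successively (\<lambda>a b. a = b \<or> E a b) W \<Longrightarrow> distinct W \<Longrightarrow> successively E W"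
  by (induction W) (auto simp: successively_Cons hd_in_set)

lemma L1:
  "successively (\<lambda>a b. a = b \<or> E a b) W \<Longrightarrow> W \<noteq> [] \<Longrightarrow>
   \<exists>P. P \<noteq> [] \<and> distinct P \<and> successively E P \<and> hd P = hd W \<and> last P = last W \<and> set P \<subseteq> set W"
proof (induction "length W" arbitrary: W rule: less_induct)
  case less
  show ?case
  proof (cases "distinct W")
    case True
    then show ?thesis using less.prems succ_distinct by blast
  next
    case False
    then obtain xs ys zs y where W: "W = xs @ [y] @ ys @ [y] @ zs"
      using not_distinct_decomp by blast
    define W' where "W' = xs @ [y] @ zs"
    have "length W' < length W" unfolding W'_def W by simp
    moreover have "successively (\<lambda>a b. a = b \<or> E a b) W'"
      using less.prems(1) unfolding W W'_def
      by (auto simp: successively_append_iff successively_Cons split: if_splits)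
    moreover have "W' \<noteq> []" unfolding W'_def by simp
    ultimately obtain P where P: "P \<noteq> [] \<and> distinct P \<and> successively E P \<and> hd P = hd W' \<and> last P = last W' \<and> set P \<subseteq> set W'"
      using less.hyps by blast
    have "hd W' = hd W" unfolding W'_def W by (cases xs) simp_all
    moreover have "last W' = last W" unfolding W'_def W by (cases zs) simp_all
    moreover have "set W' \<subseteq> set W" unfolding W'_def W by auto
    ultimately show ?thesis using P by auto
  qed
qed

lemma FL:
  assumes "symp E" "\<not> cyc E V" "W \<noteq> []" "successively (\<lambda>a b. a = b \<or> E a b) W" "set W \<subseteq> V"
    "P \<noteq> []" "distinct P" "successively E P" "set P \<subseteq> V" "hd P = hd W" "last P = last W"
  shows "set P \<subseteq> set W"
proof -
  obtain Q where Q: "Q \<noteq> [] \<and> distinct Q \<and> successively E Q \<and> hd Q = hd W \<and> last Q = last W \<and> set Q \<subseteq> set W"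
    using L1[OF assms(4,3)] by blast
  have "P = Q"
  proof (rule ccontr)
    assume "P \<noteq> Q"
    then have "cyc E V" using L2[OF assms(1), of P Q V] Q assms by auto
    then show False using assms(2) by simp
  qed
  then show ?thesis using Q by simp
qed


lemma arc_sub: "(a, b) \<in> D_arcs C \<Longrightarrow> b \<subseteq> a"
  by (auto simp: D_arcs_def)

lemma lin3: "linearization n M C \<Longrightarrow> c \<in> C \<Longrightarrow> c \<subseteq> M"
  unfolding linearization_def by blast

lemma lin4: "linearization n M C \<Longrightarrow> m \<in> proper_monomials n M \<Longrightarrow> \<exists>c\<in>C. \<Union>c = m \<and> (\<forall>m'\<in>c. card m' < card m)"
  unfolding linearization_def by blast

lemma dp:
  assumes lin: "linearization n M C" and "u \<in> M" "x \<in> u"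
  shows "\<exists>ps. ps \<noteq> [] \<and> hd ps = u \<and> last ps = {x} \<and> successively (G_adj C) ps \<and>
     distinct ps \<and> set ps \<subseteq> M \<and> (\<forall>v\<in>set ps. x \<in> v \<and> v \<subseteq> u)"
  using assms(2,3)
proof (induction "card u" arbitrary: u rule: less_induct)
  case less
  show ?case
  proof (cases "u = {x}")
    case True
    then show ?thesis using less.prems by (intro exI[of _ "[u]"]) simp
  next
    case False
    have "u \<notin> singletons n"
    proof
      assume "u \<in> singletons n"
      then obtain y where "u = {y}" unfolding singletons_def by blast
      then show False using False less.prems by simp
    qed
    then have "u \<in> proper_monomials n M" using less.prems unfolding proper_monomials_def by simp
    then obtain c where c: "c \<in> C" "\<Union>c = u" "\<forall>m'\<in>c. card m' < card u"
      using lin4[OF lin] by blast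
    obtain m' where m': "m' \<in> c" "x \<in> m'" using c(2) less.prems by auto
    have m'M: "m' \<in> M" using lin3[OF lin c(1)] m'(1) by blast
    have m'u: "m' \<subseteq> u" using c(2) m'(1) by auto
    have cl: "card m' < card u" using c(3) m'(1) by auto
    obtain ps where ps: "ps \<noteq> [] \<and> hd ps = m' \<and> last ps = {x} \<and> successively (G_adj C) ps \<and>
     distinct ps \<and> set ps \<subseteq> M \<and> (\<forall>v\<in>set ps. x \<in> v \<and> v \<subseteq> m')"
      using less.hyps[OF cl m'M m'(2)] by blast
    have adj: "G_adj C u m'" unfolding G_adj_def D_arcs_def using c m'(1) by blast
    have "u \<notin> set ps"
    proof
      assume "u \<in> set ps"
      then have "u \<subseteq> m'" using ps by blast
      then have "u = m'" using m'u by blast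
      then show False using cl by simp
    qed
    have "successively (G_adj C) (u # ps)" using ps adj by (simp add: successively_Cons)
    moreover have "distinct (u # ps)" using ps \<open>u \<notin> set ps\<close> by simp
    moreover have "set (u # ps) \<subseteq> M" using ps less.prems by simp
    moreover have "\<forall>v\<in>set (u # ps). x \<in> v \<and> v \<subseteq> u"
    proof
      fix v assume "v \<in> set (u # ps)"
      then consider "v = u" | "v \<in> set ps" by auto
      then show "x \<in> v \<and> v \<subseteq> u"
      proof cases
        case 1 then show ?thesis using less.prems by simp
      next
        case 2
        then have "x \<in> v" "v \<subseteq> m'" using ps by auto
        then show ?thesis using m'u by auto
      qed
    qed
    moreover have "last (u # ps) = {x}" using ps by simp
    ultimately show ?thesis using ps by (intro exI[of _ "u # ps"]) simp
  qed
qed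

lemma symG: "symp (G_adj C)" by (auto simp: symp_def G_adj_def)

lemma walk_join:
  assumes "pa \<noteq> []" "pu \<noteq> []" "successively E pa" "successively E pu" "last pa = last pu" "symp E"
  shows "successively (\<lambda>a b. a = b \<or> E a b) (pa @ rev pu)" "hd (pa @ rev pu) = hd pa"
    "last (pa @ rev pu) = hd pu"
proof -
  have "successively (\<lambda>a b. a = b \<or> E a b) pa"
    using assms(3) by (rule successively_mono) auto
  moreover have "successively (\<lambda>x y. E y x) pu"
    using assms(4) by (rule successively_mono) (use assms(6) in \<open>auto dest: sympD\<close>)
  then have "successively E (rev pu)" by (subst successively_rev)
  then have "successively (\<lambda>a b. a = b \<or> E a b) (rev pu)"
    by (rule successively_mono) auto
  moreover have "hd (rev pu) = last pu" using assms(2) by (simp add: hd_rev)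
  ultimately show "successively (\<lambda>a b. a = b \<or> E a b) (pa @ rev pu)"
    using assms(5) by (simp add: successively_append_iff)
  show "hd (pa @ rev pu) = hd pa" using assms(1) by simp
  show "last (pa @ rev pu) = hd pu" using assms(2) by (simp add: last_rev)
qed

lemma side:
  assumes lin: "linearization n M C" and NC: "\<not> cyc (G_adj C) M"
    and aM: "a \<in> M" and uM: "u \<in> M" and "i \<in> a" "y \<in> a" "i \<in> u" "y \<in> u" "z \<in> u" "z \<notin> a"
  obtains s where "(u, s) \<in> D_arcs C" "s \<noteq> u" "s \<subseteq> u" "i \<in> s" "y \<in> s" "s \<in> M"
proof -
  obtain pa where pa: "pa \<noteq> [] \<and> hd pa = a \<and> last pa = {i} \<and> successively (G_adj C) pa \<and>
     distinct pa \<and> set pa \<subseteq> M \<and> (\<forall>v\<in>set pa. i \<in> v \<and> v \<subseteq> a)"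
    using dp[OF lin aM \<open>i \<in> a\<close>] by blast
  obtain pu where pu: "pu \<noteq> [] \<and> hd pu = u \<and> last pu = {i} \<and> successively (G_adj C) pu \<and>
     distinct pu \<and> set pu \<subseteq> M \<and> (\<forall>v\<in>set pu. i \<in> v \<and> v \<subseteq> u)"
    using dp[OF lin uM \<open>i \<in> u\<close>] by blast
  obtain qa where qa: "qa \<noteq> [] \<and> hd qa = a \<and> last qa = {y} \<and> successively (G_adj C) qa \<and>
     distinct qa \<and> set qa \<subseteq> M \<and> (\<forall>v\<in>set qa. y \<in> v \<and> v \<subseteq> a)"
    using dp[OF lin aM \<open>y \<in> a\<close>] by blast
  obtain qu where qu: "qu \<noteq> [] \<and> hd qu = u \<and> last qu = {y} \<and> successively (G_adj C) qu \<and>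
     distinct qu \<and> set qu \<subseteq> M \<and> (\<forall>v\<in>set qu. y \<in> v \<and> v \<subseteq> u)"
    using dp[OF lin uM \<open>y \<in> u\<close>] by blast
  define W1 where "W1 = pa @ rev pu"
  define W2 where "W2 = qa @ rev qu"
  have W1: "successively (\<lambda>a b. a = b \<or> G_adj C a b) W1" "hd W1 = a" "last W1 = u" "W1 \<noteq> []"
    using walk_join[of pa pu "G_adj C", OF _ _ _ _ _ symG] pa pu unfolding W1_def by auto
  have W2: "successively (\<lambda>a b. a = b \<or> G_adj C a b) W2" "hd W2 = a" "last W2 = u" "W2 \<noteq> []"
    using walk_join[of qa qu "G_adj C", OF _ _ _ _ _ symG] qa qu unfolding W2_def by auto
  have sW1: "set W1 \<subseteq> M" "set W2 \<subseteq> M" using pa pu qa qu unfolding W1_def W2_def by auto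
  obtain P where P: "P \<noteq> []" "distinct P" "successively (G_adj C) P" "hd P = a" "last P = u" "set P \<subseteq> set W1"
    using L1[OF W1(1) W1(4)] W1 by auto
  have PM: "set P \<subseteq> M" using P sW1 by blast
  have PW2: "set P \<subseteq> set W2"
    using FL[OF symG NC W2(4) W2(1) sW1(2) P(1-3) PM] P W2 by simp
  have au: "a \<noteq> u" using assms(9,10) by blast
  obtain s R where rP: "rev P = u # s # R"
  proof -
    obtain R0 where R0: "rev P = u # R0" using P(1,5)
      by (metis hd_rev list.exhaust rev_is_Nil_conv list.sel(1))
    have "R0 \<noteq> []"
    proof
      assume "R0 = []"
      then have "P = [u]" using R0 by (metis rev_rev_ident rev_singleton_conv)
      then show False using P(4) au by simp
    qed
    then obtain s R where "R0 = s # R" by (cases R0) auto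
    then show ?thesis using R0 that by blast
  qed
  have Pd: "P = rev R @ [s, u]" using rP by (metis rev_rev_ident rev.simps append.assoc append_Cons append_Nil)
  have Gsu: "G_adj C s u" using P(3) Pd by (simp add: successively_append_iff)
  have su: "s \<noteq> u" using P(2) Pd by simp
  have sP: "s \<in> set P" using Pd by simp
  then have sW: "s \<in> set W1" "s \<in> set W2" using P(6) PW2 by auto
  then have si: "i \<in> s" "s \<subseteq> a \<or> s \<subseteq> u" "s \<in> M" using pa pu sW1 unfolding W1_def by auto
  have sy: "y \<in> s" using sW(2) qa qu unfolding W2_def by auto
  have "(u, s) \<in> D_arcs C"
  proof (rule ccontr)
    assume "(u, s) \<notin> D_arcs C"
    then have "(s, u) \<in> D_arcs C" using Gsu unfolding G_adj_def by blast
    then have "u \<subseteq> s" by (rule arc_sub)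
    then show False using si(2) su assms(9,10) by blast
  qed
  moreover have "s \<subseteq> u" using arc_sub[OF calculation] .
  ultimately show ?thesis using su si sy that by blast
qed


lemma finM: "linearization n M C \<Longrightarrow> u \<in> M \<Longrightarrow> finite u"
proof -
  assume "linearization n M C" "u \<in> M"
  then have "u \<in> monomials n" unfolding linearization_def by blast
  then have "u \<subseteq> {1..n}" unfolding monomials_def by simp
  then show "finite u" using finite_subset by blast
qed

theorem lemma4p4:
  fixes n :: nat and M T :: "nat set set" and C :: "nat set set set"
    and m1 m2 m3 :: "nat set"
  assumes "T \<subseteq> monomials n"
    and "simple_linearization n M C"
    and "singletons n \<union> T \<subseteq> M"
    and "\<forall>v\<in>M. in_degree_zero C v \<longrightarrow> v \<in> T"
    and "m1 \<in> T" and "m2 \<in> T" and "m3 \<in> T"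
    and "m1 \<noteq> m2" and "m1 \<noteq> m3" and "m2 \<noteq> m3"
    and "m1 \<inter> m2 \<inter> m3 \<noteq> {}"
    and "m3 \<inter> m1 \<subset> m3 \<inter> (m1 \<union> m2)"
    and "m3 \<inter> m2 \<subset> m3 \<inter> (m1 \<union> m2)"
  shows "G_has_cycle M C"
proof (rule ccontr)
  assume NC0: "\<not> G_has_cycle M C"
  have NC: "\<not> cyc (G_adj C) M" using NC0 unfolding G_has_cycle_def cyc_def .
  have lin: "linearization n M C" using assms(2) unfolding simple_linearization_def by blast
  have m1M: "m1 \<in> M" and m2M: "m2 \<in> M" and m3M: "m3 \<in> M" using assms(3,5,6,7) by auto
  obtain i where i: "i \<in> m1" "i \<in> m2" "i \<in> m3" using assms(11) by auto
  obtain j where j: "j \<in> m3" "j \<in> m2" "j \<notin> m1" using psubset_imp_ex_mem[OF assms(12)] by auto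
  obtain k where k: "k \<in> m3" "k \<in> m1" "k \<notin> m2" using psubset_imp_ex_mem[OF assms(13)] by auto
  have key: "u \<in> M \<Longrightarrow> i \<in> u \<Longrightarrow> j \<in> u \<Longrightarrow> k \<in> u \<Longrightarrow> False" for u
  proof (induction "card u" arbitrary: u rule: less_induct)
    case less
    obtain s where s: "(u, s) \<in> D_arcs C" "s \<noteq> u" "s \<subseteq> u" "i \<in> s" "k \<in> s" "s \<in> M"
      using side[OF lin NC m1M less.prems(1) i(1) k(2) less.prems(2) less.prems(4) less.prems(3) j(3)] .
    obtain t where t: "(u, t) \<in> D_arcs C" "t \<noteq> u" "t \<subseteq> u" "i \<in> t" "j \<in> t" "t \<in> M"
      using side[OF lin NC m2M less.prems(1) i(2) j(2) less.prems(2) less.prems(3) less.prems(4) k(3)] .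
    have st: "s = t"
    proof (rule ccontr)
      assume st: "s \<noteq> t"
      obtain ps where ps: "ps \<noteq> [] \<and> hd ps = s \<and> last ps = {i} \<and> successively (G_adj C) ps \<and>
        distinct ps \<and> set ps \<subseteq> M \<and> (\<forall>v\<in>set ps. i \<in> v \<and> v \<subseteq> s)"
        using dp[OF lin s(6) s(4)] by blast
      obtain pt where pt: "pt \<noteq> [] \<and> hd pt = t \<and> last pt = {i} \<and> successively (G_adj C) pt \<and>
        distinct pt \<and> set pt \<subseteq> M \<and> (\<forall>v\<in>set pt. i \<in> v \<and> v \<subseteq> t)"
        using dp[OF lin t(6) t(4)] by blast
      have us: "u \<notin> set ps"
      proof
        assume "u \<in> set ps"
        then have "u \<subseteq> s" using ps by blast
        then show False using s(2,3) by blast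
      qed
      have ut: "u \<notin> set pt"
      proof
        assume "u \<in> set pt"
        then have "u \<subseteq> t" using pt by blast
        then show False using t(2,3) by blast
      qed
      have Gs: "G_adj C u s" using s(1) unfolding G_adj_def by blast
      have Gt: "G_adj C u t" using t(1) unfolding G_adj_def by blast
      have "cyc (G_adj C) M"
      proof (rule L2[OF symG, where xs = "u # ps" and ys = "u # pt" and V = M])
        show "distinct (u # ps)" using ps us by simp
        show "distinct (u # pt)" using pt ut by simp
        show "successively (G_adj C) (u # ps)" using ps Gs by (simp add: successively_Cons)
        show "successively (G_adj C) (u # pt)" using pt Gt by (simp add: successively_Cons)
        show "last (u # ps) = last (u # pt)" using ps pt by simp
        show "u # ps \<noteq> u # pt" using ps pt st by auto
        show "set (u # ps) \<subseteq> M" using ps less.prems(1) by simp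
        show "set (u # pt) \<subseteq> M" using pt less.prems(1) by simp
      qed simp_all
      then show False using NC by simp
    qed
    have "s \<subset> u" using s(2,3) by blast
    then have cs: "card s < card u"
      using psubset_card_mono[OF finM[OF lin less.prems(1)]] by blast
    have "j \<in> s" using t(5) st by simp
    then show False using less.hyps[OF cs s(6) s(4) _ s(5)] by blast
  qed
  show False using key[OF m3M i(3) j(1) k(1)] .
qed

end
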